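(* For every integer $n\geq2$, $\mathcal{N}^{\perp}\cap HC(W_n^{*})=\varnothing$.
   Context: $H^2$ denotes the Hardy space of analytic functions $f(z)=\sum_{j\ge0}\hat f(j)z^j$ on the open unit disk $\mathbb{D}$ with $\sum_{j}|\hat f(j)|^2<\infty$. For $n\in\mathbb{N}$, $W_n$ is the bounded operator on $H^2$ given by $W_nf(z)=(1+z+\cdots+z^{n-1})f(z^n)$, $W_n^{*}$ is its adjoint, and $HC(W_n^{*})$ is the set of vectors with dense orbit under $W_n^{*}$. For each integer $k\geq2$, $h_k(z)=\frac{1}{1-z}\log\left(\frac{1+z+\cdots+z^{k-1}}{k}\right)$ (holomorphic branch of the logarithm on $\mathbb{D}$, real at $z=0$), which lies in $H^2$; $\mathcal{N}=\mathrm{span}\{h_k:k\geq2\}$ and $\mathcal{N}^\perp$ is its orthogonal complement in $H^2$. *)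

theory Defs
  imports "HOL-Complex_Analysis.Complex_Analysis"
begin

definition coef :: "(complex \<Rightarrow> complex) \<Rightarrow> nat \<Rightarrow> complex" where
  "coef F j = (deriv ^^ j) F 0 / of_nat (fact j)"

definition H2 :: "(complex \<Rightarrow> complex) set" where
  "H2 = {F. F holomorphic_on ball 0 1 \<and> summable (\<lambda>j. (cmod (coef F j))\<^sup>2)}"

definition h2_inner :: "(complex \<Rightarrow> complex) \<Rightarrow> (complex \<Rightarrow> complex) \<Rightarrow> complex" where
  "h2_inner F G = (\<Sum>j. coef F j * cnj (coef G j))"

definition h2_norm :: "(complex \<Rightarrow> complex) \<Rightarrow> real" where
  "h2_norm F = sqrt (\<Sum>j. (cmod (coef F j))\<^sup>2)"

definition Wop :: "nat \<Rightarrow> (complex \<Rightarrow> complex) \<Rightarrow> (complex \<Rightarrow> complex)" where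
  "Wop n F = (\<lambda>z. (\<Sum>i<n. z ^ i) * F (z ^ n))"

definition is_adjoint_on_H2 ::
  "((complex \<Rightarrow> complex) \<Rightarrow> (complex \<Rightarrow> complex)) \<Rightarrow> ((complex \<Rightarrow> complex) \<Rightarrow> (complex \<Rightarrow> complex)) \<Rightarrow> bool" where
  "is_adjoint_on_H2 T S \<longleftrightarrow> (\<forall>G\<in>H2. S G \<in> H2) \<and>
     (\<forall>F\<in>H2. \<forall>G\<in>H2. h2_inner (T F) G = h2_inner F (S G))"

definition hypercyclic_vectors ::
  "((complex \<Rightarrow> complex) \<Rightarrow> (complex \<Rightarrow> complex)) \<Rightarrow> (complex \<Rightarrow> complex) set" where
  "hypercyclic_vectors T =
     {F \<in> H2. \<forall>G\<in>H2. \<forall>e>0. \<exists>m::nat. h2_norm ((T ^^ m) F - G) < e}"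

text \<open>h_k(z) = 1/(1-z) * log((1+z+...+z^(k-1))/k); the principal logarithm is the
  holomorphic branch on the disk that is real at 0.\<close>
definition hk :: "nat \<Rightarrow> complex \<Rightarrow> complex" where
  "hk k = (\<lambda>z. (1 / (1 - z)) * Ln ((\<Sum>i<k. z ^ i) / of_nat k))"

definition Nspan :: "(complex \<Rightarrow> complex) set" where
  "Nspan = {G. \<exists>K c. finite K \<and> K \<subseteq> {2..} \<and> G = (\<lambda>z. \<Sum>k\<in>K. c k * hk k z)}"

definition Nperp :: "(complex \<Rightarrow> complex) set" where
  "Nperp = {F \<in> H2. \<forall>G\<in>Nspan. h2_inner F G = 0}"

end

theory Submission
  imports Defs
begin


lemma coef_cong:
  assumes "r > 0" "\<And>z. z \<in> ball 0 r \<Longrightarrow> f z = g z"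
  shows "coef f = coef g"
proof
  fix j
  have ev: "eventually (\<lambda>z. f z = g z) (nhds 0)"
    unfolding eventually_nhds using assms by (intro exI[of _ "ball 0 r"]) auto
  show "coef f j = coef g j"
    unfolding coef_def using higher_deriv_cong_ev[OF ev refl] by simp
qed

lemma H2_holo: "F \<in> H2 \<Longrightarrow> F holomorphic_on ball 0 1"
  by (simp add: H2_def)

lemma H2_summ: "F \<in> H2 \<Longrightarrow> summable (\<lambda>j. (cmod (coef F j))\<^sup>2)"
  by (simp add: H2_def)

lemma coef_add:
  assumes "f holomorphic_on ball 0 1" "g holomorphic_on ball 0 1"
  shows "coef (\<lambda>z. f z + g z) j = coef f j + coef g j"
  unfolding coef_def using higher_deriv_add[OF assms, of 0 j]
  by (simp add: add_divide_distrib)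

lemma coef_diff:
  assumes "f holomorphic_on ball 0 1" "g holomorphic_on ball 0 1"
  shows "coef (\<lambda>z. f z - g z) j = coef f j - coef g j"
  unfolding coef_def using higher_deriv_diff[OF assms, of 0 j]
  by (simp add: diff_divide_distrib)

lemma coef_cmult:
  assumes "f holomorphic_on ball 0 1"
  shows "coef (\<lambda>z. c * f z) j = c * coef f j"
  unfolding coef_def using higher_deriv_cmult[OF assms, of 0 j c]
  by simp

lemma H2_add:
  assumes "f \<in> H2" "g \<in> H2"
  shows "(\<lambda>z. f z + g z) \<in> H2"
proof -
  have hf: "f holomorphic_on ball 0 1" and hg: "g holomorphic_on ball 0 1"
    using assms by (auto simp: H2_def)
  have s: "summable (\<lambda>j. 2 * (cmod (coef f j))\<^sup>2 + 2 * (cmod (coef g j))\<^sup>2)"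
    using H2_summ[OF assms(1)] H2_summ[OF assms(2)] by (intro summable_add summable_mult)
  have b: "norm ((cmod (coef (\<lambda>z. f z + g z) j))\<^sup>2) \<le> 2 * (cmod (coef f j))\<^sup>2 + 2 * (cmod (coef g j))\<^sup>2" for j
  proof -
    have "cmod (coef (\<lambda>z. f z + g z) j) \<le> cmod (coef f j) + cmod (coef g j)"
      unfolding coef_add[OF hf hg] by (rule norm_triangle_ineq)
    hence "(cmod (coef (\<lambda>z. f z + g z) j))\<^sup>2 \<le> (cmod (coef f j) + cmod (coef g j))\<^sup>2"
      by (intro power_mono) auto
    also have "\<dots> \<le> 2 * (cmod (coef f j))\<^sup>2 + 2 * (cmod (coef g j))\<^sup>2"
      by (smt (verit) sum_squares_bound power2_sum)
    finally show ?thesis by simp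
  qed
  have "summable (\<lambda>j. (cmod (coef (\<lambda>z. f z + g z) j))\<^sup>2)"
    by (rule summable_comparison_test[OF _ s]) (use b in auto)
  moreover have "(\<lambda>z. f z + g z) holomorphic_on ball 0 1"
    using hf hg by (intro holomorphic_intros)
  ultimately show ?thesis by (simp add: H2_def)
qed

lemma H2_cmult:
  assumes "f \<in> H2"
  shows "(\<lambda>z. c * f z) \<in> H2"
proof -
  have hf: "f holomorphic_on ball 0 1" using assms by (auto simp: H2_def)
  have "summable (\<lambda>j. (cmod c)\<^sup>2 * (cmod (coef f j))\<^sup>2)"
    using H2_summ[OF assms] by (intro summable_mult)
  moreover have "(cmod (coef (\<lambda>z. c * f z) j))\<^sup>2 = (cmod c)\<^sup>2 * (cmod (coef f j))\<^sup>2" for j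
    unfolding coef_cmult[OF hf] by (simp add: norm_mult power_mult_distrib)
  ultimately have "summable (\<lambda>j. (cmod (coef (\<lambda>z. c * f z) j))\<^sup>2)" by simp
  moreover have "(\<lambda>z. c * f z) holomorphic_on ball 0 1"
    using hf by (intro holomorphic_intros)
  ultimately show ?thesis by (simp add: H2_def)
qed

lemma H2_zero: "(\<lambda>z. 0) \<in> H2"
  by (simp add: H2_def coef_def)

lemma H2_sum:
  assumes "finite K" "\<And>k. k \<in> K \<Longrightarrow> f k \<in> H2"
  shows "(\<lambda>z. \<Sum>k\<in>K. c k * f k z) \<in> H2"
  using assms
proof (induction K rule: finite_induct)
  case empty
  then show ?case using H2_zero by simp
next
  case (insert x F)
  have "(\<lambda>z. c x * f x z + (\<Sum>k\<in>F. c k * f k z)) \<in> H2"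
    using insert by (intro H2_add H2_cmult) auto
  then show ?case using insert by simp
qed

lemma cnj_suminf: "summable f \<Longrightarrow> cnj (suminf f) = suminf (\<lambda>n. cnj (f n))"
proof -
  assume "summable f"
  then have "f sums suminf f" by (simp add: summable_sums)
  then have "(\<lambda>n. cnj (f n)) sums cnj (suminf f)" by (simp add: sums_cnj)
  then show ?thesis by (simp add: sums_unique)
qed

lemma summable_inner:
  assumes "F \<in> H2" "G \<in> H2"
  shows "summable (\<lambda>j. coef F j * cnj (coef G j))"
proof -
  have "summable (\<lambda>j. (cmod (coef F j))\<^sup>2 + (cmod (coef G j))\<^sup>2)"
    using assms by (intro summable_add H2_summ)
  moreover have "norm (coef F j * cnj (coef G j)) \<le> (cmod (coef F j))\<^sup>2 + (cmod (coef G j))\<^sup>2" for j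
  proof -
    have "0 \<le> (cmod (coef F j) - cmod (coef G j))\<^sup>2" by simp
    then have "2*(cmod (coef F j) * cmod (coef G j)) \<le> cmod (coef F j) * cmod (coef F j) + cmod (coef G j) * cmod (coef G j)"
      by (simp add: power2_eq_square algebra_simps)
    moreover have "0 \<le> cmod (coef F j) * cmod (coef G j)" by simp
    ultimately show ?thesis by (simp only: norm_mult complex_mod_cnj power2_eq_square)
  qed
  ultimately show ?thesis
    by (intro summable_comparison_test[OF _ \<open>summable _\<close>]) (auto intro: exI[of _ 0])
qed

lemma inner_cnj:
  assumes "F \<in> H2" "G \<in> H2"
  shows "h2_inner F G = cnj (h2_inner G F)"
  unfolding h2_inner_def cnj_suminf[OF summable_inner[OF assms(2,1)]] by (simp add: mult.commute)

lemma l2_lemma: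
  assumes "F \<in> H2" "H \<in> H2" "h2_inner F H = 0"
  shows "h2_norm H \<le> h2_norm (F - H)"
proof -
  define a where "a j = coef F j" for j
  define b where "b j = coef H j" for j
  have hF: "F holomorphic_on ball 0 1" and hH: "H holomorphic_on ball 0 1"
    using assms by (auto simp: H2_def)
  have cd: "coef (F - H) j = a j - b j" for j
    unfolding fun_diff_def a_def b_def by (rule coef_diff[OF hF hH])
  have sa: "summable (\<lambda>j. (cmod (a j))\<^sup>2)" and sb: "summable (\<lambda>j. (cmod (b j))\<^sup>2)"
    using assms by (auto simp: H2_def a_def b_def)
  have sab: "summable (\<lambda>j. a j * cnj (b j))"
    unfolding a_def b_def using assms by (intro summable_inner)
  have "(\<lambda>j. a j * cnj (b j)) sums 0"
    using assms(3) sab unfolding h2_inner_def a_def b_def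
    by (metis summable_sums)
  then have sre: "(\<lambda>j. Re (a j * cnj (b j))) sums 0"
    using sums_Re by fastforce
  have eq: "(cmod (a j - b j))\<^sup>2 = (cmod (a j))\<^sup>2 + (cmod (b j))\<^sup>2 - 2 * Re (a j * cnj (b j))" for j
    by (simp only: cmod_power2) (simp add: power2_eq_square algebra_simps)
  have "(\<lambda>j. (cmod (a j))\<^sup>2 + (cmod (b j))\<^sup>2 - 2 * Re (a j * cnj (b j))) sums
          ((\<Sum>j. (cmod (a j))\<^sup>2) + (\<Sum>j. (cmod (b j))\<^sup>2) - 2 * 0)"
    by (intro sums_diff sums_add sums_mult summable_sums sa sb sre)
  then have "(\<lambda>j. (cmod (coef (F - H) j))\<^sup>2) sums ((\<Sum>j. (cmod (a j))\<^sup>2) + (\<Sum>j. (cmod (b j))\<^sup>2))"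
    unfolding cd eq by simp
  then have "(\<Sum>j. (cmod (coef (F - H) j))\<^sup>2) = (\<Sum>j. (cmod (a j))\<^sup>2) + (\<Sum>j. (cmod (b j))\<^sup>2)"
    by (rule sums_unique[symmetric])
  moreover have "0 \<le> (\<Sum>j. (cmod (a j))\<^sup>2)" using sa by (intro suminf_nonneg) auto
  ultimately have "(\<Sum>j. (cmod (b j))\<^sup>2) \<le> (\<Sum>j. (cmod (coef (F - H) j))\<^sup>2)" by simp
  then show ?thesis unfolding h2_norm_def b_def by simp
qed


lemma norm_pow_lt1: "cmod (u::complex) < 1 \<Longrightarrow> k \<ge> 1 \<Longrightarrow> cmod (u ^ k) < 1"
  by (simp add: norm_power power_less_one_iff)

lemma Re_one_minus_pos: "cmod (u::complex) < 1 \<Longrightarrow> 0 < Re (1 - u)"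
  using complex_Re_le_cmod[of u] by simp

lemma sum_pow_eq: "cmod (v::complex) < 1 \<Longrightarrow> (\<Sum>i<k. v ^ i) = (1 - v ^ k) / (1 - v)"
  by (subst sum_gp_strict) auto

lemma Ln_formula:
  assumes v: "cmod v < 1" and k: "k \<ge> 1"
  shows "Ln ((\<Sum>i<k. v ^ i) / of_nat k) = Ln (1 - v ^ k) - Ln (1 - v) - of_real (ln (real k))"
proof -
  define a where "a = 1 - v ^ k"
  define b where "b = 1 - v"
  have Ra: "0 < Re a" unfolding a_def using Re_one_minus_pos[OF norm_pow_lt1[OF v k]] .
  have Rb: "0 < Re b" unfolding b_def using Re_one_minus_pos[OF v] .
  have a0: "a \<noteq> 0" using Ra by auto
  have b0: "b \<noteq> 0" using Rb by auto
  define w where "w = Ln a - Ln b - of_real (ln (real k))"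
  have "exp w = a / b / of_nat k"
    unfolding w_def using a0 b0 k
    by (simp add: exp_diff exp_of_real)
  moreover have "-pi < Im w" "Im w \<le> pi"
    unfolding w_def using Re_Ln_pos_lt_imp[OF Ra] Re_Ln_pos_lt_imp[OF Rb] by auto
  ultimately have "Ln (a / b / of_nat k) = w"
    by (metis Ln_exp)
  moreover have "(\<Sum>i<k. v ^ i) = a / b" unfolding a_def b_def by (rule sum_pow_eq[OF v])
  ultimately show ?thesis unfolding w_def a_def b_def by simp
qed

lemma hk_eq:
  assumes "cmod v < 1" "k \<ge> 1"
  shows "hk k v = 1 / (1 - v) * (Ln (1 - v ^ k) - Ln (1 - v) - of_real (ln (real k)))"
  unfolding hk_def using Ln_formula[OF assms] by simp

lemma Wop_hk:
  assumes z: "cmod z < 1" and n: "n \<ge> 1" and k: "k \<ge> 1"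
  shows "(\<Sum>i<n. z ^ i) * hk k (z ^ n) = hk (n * k) z - hk n z"
proof -
  have zn: "cmod (z ^ n) < 1" using norm_pow_lt1[OF z n] .
  have z1: "1 - z \<noteq> 0" using Re_one_minus_pos[OF z] by auto
  have zn1: "1 - z ^ n \<noteq> 0" using Re_one_minus_pos[OF zn] by auto
  have nk: "n * k \<ge> 1" using n k by simp
  have lnk: "ln (real (n * k)) = ln (real n) + ln (real k)"
    using n k by (simp add: ln_mult)
  define X where "X = Ln (1 - z ^ (n * k)) - Ln (1 - z ^ n) - of_real (ln (real k))"
  have "(\<Sum>i<n. z ^ i) * hk k (z ^ n) = (1 - z ^ n) / (1 - z) * (1 / (1 - z ^ n) * X)"
    unfolding hk_eq[OF zn k] sum_pow_eq[OF z] X_def by (simp add: power_mult)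
  also have "\<dots> = ((1 - z ^ n) * inverse (1 - z ^ n)) * (1 / (1 - z) * X)"
    by (simp add: divide_inverse ac_simps)
  also have "\<dots> = 1 / (1 - z) * X" using zn1 by simp
  also have "\<dots> = hk (n * k) z - hk n z"
    unfolding hk_eq[OF z nk] hk_eq[OF z n] lnk X_def
    by (simp add: algebra_simps)
  finally show ?thesis .
qed

lemma hk_not_nonpos:
  assumes z: "cmod z < 1" and k: "k \<ge> 1"
  shows "(\<Sum>i<k. z ^ i) / of_nat k \<notin> \<real>\<^sub>\<le>\<^sub>0"
proof
  assume "(\<Sum>i<k. z ^ i) / of_nat k \<in> \<real>\<^sub>\<le>\<^sub>0"
  then obtain r where r: "r \<le> 0" "(\<Sum>i<k. z ^ i) / of_nat k = of_real r"
    by (auto simp: nonpos_Reals_def)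
  have z1: "1 - z \<noteq> 0" using Re_one_minus_pos[OF z] by auto
  have "1 - z ^ k = of_real (r * real k) * (1 - z)"
    using r(2) k z1 unfolding sum_pow_eq[OF z] by (simp add: field_simps)
  then have "Re (1 - z ^ k) = r * real k * Re (1 - z)"
    by simp
  moreover have "r * real k * Re (1 - z) \<le> 0"
    using r(1) Re_one_minus_pos[OF z]
    by (simp add: mult_nonpos_nonneg)
  moreover have "0 < Re (1 - z ^ k)" using Re_one_minus_pos[OF norm_pow_lt1[OF z k]] .
  ultimately show False by simp
qed

lemma hk_holo:
  assumes k: "k \<ge> 1"
  shows "hk k holomorphic_on ball 0 1"
proof -
  have "(\<lambda>z. (1 / (1 - z)) * Ln ((\<Sum>i<k. z ^ i) / of_nat k)) holomorphic_on ball 0 1"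
  proof (intro holomorphic_intros)
    fix z :: complex assume "z \<in> ball 0 1"
    then have z: "cmod z < 1" by simp
    show "1 - z \<noteq> 0" using Re_one_minus_pos[OF z] by auto
    show "(\<Sum>i<k. z ^ i) / of_nat k \<notin> \<real>\<^sub>\<le>\<^sub>0" by (rule hk_not_nonpos[OF z k])
    show "(of_nat k :: complex) \<noteq> 0" using k by simp
  qed
  then show ?thesis unfolding hk_def .
qed


definition gc :: "nat \<Rightarrow> nat \<Rightarrow> complex" where
  "gc k j = (if j = 0 then - of_real (ln (real k)) else 0) + 1 / of_nat j
             - (if k dvd j then of_nat k / of_nat j else 0)"

definition ac :: "nat \<Rightarrow> nat \<Rightarrow> complex" where
  "ac k J = (\<Sum>j\<le>J. gc k j)"

lemma g_sums:
  assumes u: "cmod u < 1" and k: "k \<ge> 1"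
  shows "(\<lambda>j. gc k j * u ^ j) sums (Ln (1 - u ^ k) - Ln (1 - u) - of_real (ln (real k)))"
proof -
  have s1: "(\<lambda>j. (if j = 0 then - of_real (ln (real k)) else 0) * u ^ j) sums (- of_real (ln (real k)))"
  proof -
    have "(\<lambda>j. if j = 0 then (\<lambda>_. - of_real (ln (real k)) :: complex) j else 0) sums (- of_real (ln (real k)))"
      using sums_single[of 0 "\<lambda>_. - of_real (ln (real k)) :: complex"] by simp
    moreover have "(\<lambda>j. (if j = 0 then - of_real (ln (real k)) else 0) * u ^ j) =
        (\<lambda>j. if j = 0 then (\<lambda>_. - of_real (ln (real k)) :: complex) j else 0)"
      by auto
    ultimately show ?thesis by simp
  qed
  have s2: "(\<lambda>j. 1 / of_nat j * u ^ j) sums (- Ln (1 - u))"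
  proof -
    have "(\<lambda>n. - ((- (- u)) ^ n) / of_nat n) sums Ln (1 + - u)"
      using Ln_series'[of "-u"] u by simp
    then have "(\<lambda>n. - (- ((- (- u)) ^ n) / of_nat n)) sums (- Ln (1 + - u))"
      by (rule sums_minus)
    then show ?thesis by simp
  qed
  have s3: "(\<lambda>j. (if k dvd j then of_nat k / of_nat j else 0) * u ^ j) sums (- Ln (1 - u ^ k))"
  proof -
    have uk: "cmod (- (u ^ k)) < 1" using norm_pow_lt1[OF u k] by simp
    have "(\<lambda>n. - ((- (- (u ^ k))) ^ n) / of_nat n) sums Ln (1 + - (u ^ k))"
      using Ln_series'[OF uk] .
    then have "(\<lambda>n. - (- ((- (- (u ^ k))) ^ n) / of_nat n)) sums (- Ln (1 + - (u ^ k)))"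
      by (rule sums_minus)
    then have A: "(\<lambda>m. (u ^ k) ^ m / of_nat m) sums (- Ln (1 - u ^ k))" by simp
    define f where "f j = (if k dvd j then of_nat k / of_nat j else 0) * u ^ j" for j
    have "(\<lambda>m. f (k * m)) = (\<lambda>m. (u ^ k) ^ m / of_nat m)"
    proof
      fix m
      show "f (k * m) = (u ^ k) ^ m / of_nat m"
        using k by (cases "m = 0") (auto simp: f_def power_mult field_simps)
    qed
    with A have "(\<lambda>m. f (k * m)) sums (- Ln (1 - u ^ k))" by simp
    moreover have "strict_mono (\<lambda>m. k * m)" using k by (auto simp: strict_mono_def)
    moreover have "\<And>n. n \<notin> range (\<lambda>m. k * m) \<Longrightarrow> f n = 0"
      by (auto simp: f_def)
    ultimately have "f sums (- Ln (1 - u ^ k))"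
      using sums_mono_reindex[of "\<lambda>m. k * m" f] by simp
    then show ?thesis unfolding f_def .
  qed
  have "(\<lambda>j. (if j = 0 then - of_real (ln (real k)) else 0) * u ^ j + 1 / of_nat j * u ^ j
          - (if k dvd j then of_nat k / of_nat j else 0) * u ^ j)
        sums (- of_real (ln (real k)) + - Ln (1 - u) - - Ln (1 - u ^ k))"
    by (intro sums_diff sums_add s1 s2 s3)
  moreover have "(\<lambda>j. (if j = 0 then - of_real (ln (real k)) else 0) * u ^ j + 1 / of_nat j * u ^ j
          - (if k dvd j then of_nat k / of_nat j else 0) * u ^ j) = (\<lambda>j. gc k j * u ^ j)"
    by (auto simp: gc_def algebra_simps)
  ultimately show ?thesis by (simp add: algebra_simps)
qed

lemma gc_bound:
  assumes k: "k \<ge> 1"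
  shows "cmod (gc k j) \<le> \<bar>ln (real k)\<bar> + 1 + real k"
proof -
  have a: "cmod (if j = 0 then - (of_real (ln (real k)) :: complex) else 0) \<le> \<bar>ln (real k)\<bar>"
    by auto
  have b: "cmod (1 / (of_nat j :: complex)) \<le> 1"
    by (cases "j = 0") (auto simp: norm_divide)
  have c: "cmod (if k dvd j then of_nat k / (of_nat j :: complex) else 0) \<le> real k"
  proof (cases "k dvd j \<and> j \<noteq> 0")
    case True
    then have "real j \<ge> 1" by simp
    then have "real k / real j \<le> real k" using k by (simp add: divide_le_eq)
    then show ?thesis using True by (simp add: norm_divide)
  next
    case False
    then show ?thesis by auto
  qed
  have "cmod (gc k j) \<le> cmod (if j = 0 then - (of_real (ln (real k)) :: complex) else 0)
        + cmod (1 / (of_nat j :: complex)) + cmod (if k dvd j then of_nat k / (of_nat j :: complex) else 0)"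
    unfolding gc_def by (rule order.trans[OF norm_triangle_ineq4]) (intro add_mono norm_triangle_ineq order.refl)
  then show ?thesis using a b c by linarith
qed

lemma hk_sums:
  assumes u: "cmod u < 1" and k: "k \<ge> 1"
  shows "(\<lambda>J. ac k J * u ^ J) sums hk k u"
proof -
  define C where "C = \<bar>ln (real k)\<bar> + 1 + real k"
  have sa: "summable (\<lambda>j. norm (gc k j * u ^ j))"
  proof (rule summable_comparison_test[of _ "\<lambda>j. C * cmod u ^ j"])
    show "\<exists>N. \<forall>n\<ge>N. norm (norm (gc k n * u ^ n)) \<le> C * cmod u ^ n"
      using gc_bound[OF k] by (auto simp: C_def norm_mult norm_power intro!: mult_right_mono)
    show "summable (\<lambda>j. C * cmod u ^ j)" using u by (intro summable_mult summable_geometric) simp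
  qed
  have sb: "summable (\<lambda>i. norm (u ^ i))"
    using u by (simp add: norm_power summable_geometric)
  have "(\<lambda>J. \<Sum>i\<le>J. (gc k i * u ^ i) * u ^ (J - i)) sums ((\<Sum>j. gc k j * u ^ j) * (\<Sum>i. u ^ i))"
    by (rule Cauchy_product_sums[OF sa sb])
  moreover have "(\<Sum>j. gc k j * u ^ j) = Ln (1 - u ^ k) - Ln (1 - u) - of_real (ln (real k))"
    using g_sums[OF u k] by (simp add: sums_iff)
  moreover have "(\<Sum>i. u ^ i) = 1 / (1 - u)" using u by (rule suminf_geometric)
  moreover have "(\<Sum>i\<le>J. (gc k i * u ^ i) * u ^ (J - i)) = ac k J * u ^ J" for J
  proof -
    have "(\<Sum>i\<le>J. (gc k i * u ^ i) * u ^ (J - i)) = (\<Sum>i\<le>J. gc k i * u ^ J)"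
      by (intro sum.cong refl) (simp add: mult.assoc power_add[symmetric])
    then show ?thesis by (simp add: ac_def sum_distrib_right)
  qed
  ultimately show ?thesis using hk_eq[OF u k] by (simp add: mult.commute)
qed

lemma coef_hk:
  assumes k: "k \<ge> 1"
  shows "coef (hk k) J = ac k J"
proof -
  have "eventually (\<lambda>u. u \<in> ball 0 1) (nhds (0::complex))"
    by (intro eventually_nhds_in_open) auto
  then have "eventually (\<lambda>u. (\<lambda>n. fps_nth (Abs_fps (ac k)) n * u ^ n) sums hk k u) (nhds 0)"
    by (rule eventually_mono) (use hk_sums[OF _ k] in auto)
  then have "hk k has_fps_expansion Abs_fps (ac k)" by (rule has_fps_expansionI)
  from fps_nth_fps_expansion[OF this, of J] show ?thesis by (simp add: coef_def)
qed


definition A :: "nat \<Rightarrow> nat \<Rightarrow> real" where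
  "A k J = harm J - harm (J div k) - ln (real k)"

lemma ac_real:
  assumes k: "k \<ge> 1"
  shows "ac k J = of_real (A k J)"
proof (induction J)
  case 0
  then show ?case by (simp add: ac_def gc_def A_def harm_def)
next
  case (Suc J)
  have gS: "gc k (Suc J) = of_real (1 / real (Suc J) - (if k dvd Suc J then real k / real (Suc J) else 0))"
    by (simp add: gc_def)
  have hS: "A k (Suc J) = A k J + (1 / real (Suc J) - (if k dvd Suc J then real k / real (Suc J) else 0))"
  proof (cases "k dvd Suc J")
    case True
    then have d: "Suc J div k = Suc (J div k)" using div_Suc[of J k] by auto
    have "real (Suc (J div k)) = real (Suc J) / real k"
      using real_of_nat_div[OF True] d by simp
    then have "inverse (real (Suc (J div k))) = real k / real (Suc J)" by simp
    then show ?thesis using True unfolding A_def d by (simp add: harm_Suc inverse_eq_divide)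
  next
    case False
    then have d: "Suc J div k = J div k" using div_Suc[of J k] k
      by (auto simp: dvd_eq_mod_eq_0)
    then show ?thesis using False unfolding A_def d by (simp add: harm_Suc inverse_eq_divide)
  qed
  show ?case
    using Suc.IH gS hS by (simp add: ac_def)
qed

lemma harm_bounds:
  assumes q: "1 \<le> q" "q \<le> J"
  shows "ln (real J + 1) - ln (real q + 1) \<le> (harm J - harm q :: real) \<and>
         (harm J - harm q :: real) \<le> ln (real J) - ln (real q)"
  using q(2)
proof (induction J rule: dec_induct)
  case base
  then show ?case by simp
next
  case (step n)
  have n1: "real n \<ge> 1" using step q by simp
  have i1: "ln (real n + 2) - ln (real n + 1) \<le> 1 / (real n + 1)"
  proof -
    have "ln ((real n + 2) / (real n + 1)) \<le> (real n + 2) / (real n + 1) - 1"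
      by (rule ln_le_minus_one) (use n1 in simp)
    also have "\<dots> = 1 / (real n + 1)" using n1 by (simp add: field_simps)
    finally show ?thesis using n1 by (simp add: ln_div)
  qed
  have i2: "1 / (real n + 1) \<le> ln (real n + 1) - ln (real n)"
  proof -
    have "ln (real n / (real n + 1)) \<le> real n / (real n + 1) - 1"
      by (rule ln_le_minus_one) (use n1 in simp)
    also have "\<dots> = - (1 / (real n + 1))" using n1 by (simp add: field_simps)
    finally show ?thesis using n1 by (simp add: ln_div)
  qed
  have hs: "(harm (Suc n) :: real) = harm n + 1 / (real n + 1)"
    by (simp add: harm_Suc inverse_eq_divide)
  show ?case using step.IH i1 i2 unfolding hs by (simp add: algebra_simps)
qed

lemma A_bound:
  assumes k: "k \<ge> 1" and J: "J \<ge> k"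
  shows "\<bar>A k J\<bar> \<le> 1 / real (J div k)"
proof -
  define q where "q = J div k"
  have q1: "q \<ge> 1" unfolding q_def using J k
    by (metis div_le_mono div_self not_one_le_zero le_zero_eq)
  have qJ: "q \<le> J" unfolding q_def by simp
  have kq: "k * q \<le> J" unfolding q_def by (metis div_times_less_eq_dividend mult.commute)
  have Jk: "J + 1 \<le> k * (q + 1)"
  proof -
    have "J = k * q + J mod k" unfolding q_def by simp
    moreover have "J mod k < k" using k by simp
    ultimately show ?thesis by (simp add: algebra_simps)
  qed
  have rq: "real q \<ge> 1" using q1 by simp
  have rJ: "real J \<ge> real q" using qJ by simp
  have rkq: "real k * real q \<le> real J" using kq by (metis of_nat_le_iff of_nat_mult)
  have rJk: "real J + 1 \<le> real k * (real q + 1)" using Jk by (metis of_nat_1 of_nat_add of_nat_le_iff of_nat_mult)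
  have hb: "ln (real J + 1) - ln (real q + 1) \<le> harm J - harm q"
           "harm J - harm q \<le> ln (real J) - ln (real q)"
    using harm_bounds[OF q1 qJ] by auto
  have lk1: "ln (real k) \<le> ln (real J) - ln (real q)"
  proof -
    have "real k \<le> real J / real q" using rkq rq by (simp add: field_simps)
    then have "ln (real k) \<le> ln (real J / real q)" using k by simp
    then show ?thesis using rq rJ by (simp add: ln_div)
  qed
  have lk2: "ln (real J + 1) - ln (real q + 1) \<le> ln (real k)"
  proof -
    have "(real J + 1) / (real q + 1) \<le> real k" using rJk rq by (simp add: field_simps)
    then have "ln ((real J + 1) / (real q + 1)) \<le> ln (real k)" using rq k
      by (subst ln_le_cancel_iff) auto
    then show ?thesis using rq by (simp add: ln_div)
  qed
  define D where "D = ln (real J) - ln (real q) - (ln (real J + 1) - ln (real q + 1))"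
  have D: "D \<le> 1 / real q"
  proof -
    have x: "D = ln ((real J * (real q + 1)) / (real q * (real J + 1)))"
      unfolding D_def using rq rJ by (simp add: ln_div ln_mult)
    have "ln ((real J * (real q + 1)) / (real q * (real J + 1))) \<le> (real J * (real q + 1)) / (real q * (real J + 1)) - 1"
      by (rule ln_le_minus_one) (use rq rJ in simp)
    also have "\<dots> = (real J - real q) / (real q * (real J + 1))"
    proof -
      have "real q * (real J + 1) \<noteq> 0" using rq rJ by simp
      then show ?thesis by (simp add: field_simps)
    qed
    also have "\<dots> \<le> (real J + 1) / (real q * (real J + 1))"
      by (rule divide_right_mono) (use rq rJ in auto)
    also have "\<dots> = 1 / real q" using rJ by simp
    finally show ?thesis using x by simp
  qed
  have "A k J \<le> D" "- D \<le> A k J" unfolding A_def D_def q_def[symmetric] using hb lk1 lk2 by linarith+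
  then show ?thesis using D unfolding q_def by linarith
qed

lemma hk_H2:
  assumes k: "k \<ge> 1"
  shows "hk k \<in> H2"
proof -
  have ev: "eventually (\<lambda>J. norm ((cmod (coef (hk k) J))\<^sup>2) \<le> (4 * real k ^ 2) * inverse (real J ^ 2)) sequentially"
  proof (rule eventually_mono[OF eventually_ge_at_top[of k]])
    fix J assume J: "k \<le> J"
    define q where "q = J div k"
    have q1: "q \<ge> 1" unfolding q_def using J k
      by (metis div_le_mono div_self not_one_le_zero le_zero_eq)
    have Jk: "J + 1 \<le> k * (q + 1)"
    proof -
      have "J = k * q + J mod k" unfolding q_def by simp
      moreover have "J mod k < k" using k by simp
      ultimately show ?thesis by (simp add: algebra_simps)
    qed
    have rq: "real q \<ge> 1" using q1 by simp
    have rJ: "real J \<ge> 1" using J k by simp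
    have "real J \<le> 2 * real k * real q"
    proof -
      have "J \<le> k * (q + 1)" using Jk by simp
      also have "\<dots> \<le> 2 * k * q" using q1 by (simp add: algebra_simps)
      finally show ?thesis by (metis of_nat_le_iff of_nat_mult of_nat_numeral)
    qed
    then have iq: "1 / real q \<le> 2 * real k / real J" using rq rJ by (simp add: field_simps)
    have "\<bar>A k J\<bar> \<le> 2 * real k / real J" using A_bound[OF k J] iq unfolding q_def by linarith
    then have "\<bar>A k J\<bar> ^ 2 \<le> (2 * real k / real J) ^ 2" by (intro power_mono) auto
    also have "\<dots> = (4 * real k ^ 2) * inverse (real J ^ 2)" by (simp add: power_divide field_simps)
    finally show "norm ((cmod (coef (hk k) J))\<^sup>2) \<le> (4 * real k ^ 2) * inverse (real J ^ 2)"
      unfolding coef_hk[OF k] ac_real[OF k] by simp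
  qed
  have "summable (\<lambda>J. (4 * real k ^ 2) * inverse (real J ^ 2))"
    by (intro summable_mult inverse_power_summable) simp
  with ev have "summable (\<lambda>J. (cmod (coef (hk k) J))\<^sup>2)" by (rule summable_comparison_test_ev)
  then show ?thesis using hk_holo[OF k] by (simp add: H2_def)
qed


lemma Nspan_H2: "G \<in> Nspan \<Longrightarrow> G \<in> H2"
  unfolding Nspan_def by (auto intro!: H2_sum hk_H2)

lemma Wop_Nspan:
  assumes n: "n \<ge> 2" and G: "G \<in> Nspan"
  shows "\<exists>G'\<in>Nspan. \<forall>z\<in>ball 0 1. Wop n G z = G' z"
proof -
  from G obtain K c where K: "finite K" "K \<subseteq> {2..}" and Gd: "G = (\<lambda>z. \<Sum>k\<in>K. c k * hk k z)"
    unfolding Nspan_def by blast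
  define K' where "K' = insert n ((\<lambda>k. n * k) ` K)"
  define c' where "c' j = (if j = n then - (\<Sum>k\<in>K. c k) else c (j div n))" for j
  define G' where "G' = (\<lambda>z. \<Sum>j\<in>K'. c' j * hk j z)"
  have nK: "n \<notin> (\<lambda>k. n * k) ` K" using K n by auto
  have inj: "inj_on (\<lambda>k. n * k) K" using n by (auto simp: inj_on_def)
  have nk2: "2 \<le> n * k" if "k \<in> K" for k
  proof -
    have "k \<ge> 1" using that K by auto
    then have "n * 1 \<le> n * k" by (intro mult_le_mono2)
    then have "n \<le> n * k" by simp
    then show ?thesis using n by linarith
  qed
  have "G' \<in> Nspan" unfolding Nspan_def G'_def K'_def using K n nk2
    by (intro CollectI exI[of _ "insert n ((\<lambda>k. n * k) ` K)"] exI[of _ c']) auto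
  moreover have "Wop n G z = G' z" if z: "z \<in> ball 0 1" for z
  proof -
    have zz: "cmod z < 1" using z by simp
    have "Wop n G z = (\<Sum>k\<in>K. c k * ((\<Sum>i<n. z ^ i) * hk k (z ^ n)))"
      unfolding Wop_def Gd by (simp add: sum_distrib_left ac_simps)
    also have "\<dots> = (\<Sum>k\<in>K. c k * (hk (n * k) z - hk n z))"
      using K n by (intro sum.cong refl) (subst Wop_hk[OF zz], auto)
    also have "\<dots> = (\<Sum>k\<in>K. c k * hk (n * k) z) - (\<Sum>k\<in>K. c k) * hk n z"
      by (simp add: algebra_simps sum_subtractf sum_distrib_left)
    also have "\<dots> = G' z"
    proof -
      have "G' z = c' n * hk n z + (\<Sum>j\<in>(\<lambda>k. n * k) ` K. c' j * hk j z)"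
        unfolding G'_def K'_def using K nK by (simp add: sum.insert)
      also have "(\<Sum>j\<in>(\<lambda>k. n * k) ` K. c' j * hk j z) = (\<Sum>k\<in>K. c' (n * k) * hk (n * k) z)"
        by (subst sum.reindex[OF inj]) simp
      also have "\<dots> = (\<Sum>k\<in>K. c k * hk (n * k) z)"
        using K n by (intro sum.cong refl) (auto simp: c'_def)
      finally show ?thesis by (simp add: c'_def)
    qed
    finally show ?thesis .
  qed
  ultimately show ?thesis by blast
qed

lemma S_Nperp:
  assumes n: "n \<ge> 2" and adj: "is_adjoint_on_H2 (Wop n) S" and F: "F \<in> Nperp"
  shows "S F \<in> Nperp"
proof -
  have FH: "F \<in> H2" using F by (simp add: Nperp_def)
  have SF: "S F \<in> H2" using adj FH by (simp add: is_adjoint_on_H2_def)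
  have "h2_inner (S F) G = 0" if G: "G \<in> Nspan" for G
  proof -
    have GH: "G \<in> H2" using Nspan_H2[OF G] .
    obtain G' where G': "G' \<in> Nspan" "\<And>z. z \<in> ball 0 1 \<Longrightarrow> Wop n G z = G' z"
      using Wop_Nspan[OF n G] by blast
    have G'H: "G' \<in> H2" using Nspan_H2[OF G'(1)] .
    have cc: "coef (Wop n G) = coef G'" by (rule coef_cong[of 1]) (use G' in auto)
    have "h2_inner (S F) G = cnj (h2_inner G (S F))" by (rule inner_cnj[OF SF GH])
    also have "h2_inner G (S F) = h2_inner (Wop n G) F"
      using adj GH FH by (simp add: is_adjoint_on_H2_def)
    also have "\<dots> = h2_inner G' F" unfolding h2_inner_def cc ..
    also have "\<dots> = cnj (h2_inner F G')" by (rule inner_cnj[OF G'H FH])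
    also have "h2_inner F G' = 0" using F G'(1) by (simp add: Nperp_def)
    finally show ?thesis by simp
  qed
  then show ?thesis using SF by (simp add: Nperp_def)
qed

lemma hk2_Nspan: "hk 2 \<in> Nspan"
  unfolding Nspan_def
  by (intro CollectI exI[of _ "{2}"] exI[of _ "\<lambda>_. 1"]) auto

lemma hk2_norm_pos: "h2_norm (hk 2) > 0"
proof -
  have H: "hk 2 \<in> H2" by (rule hk_H2) simp
  have c0: "coef (hk 2) 0 = Ln (1 / 2)" by (simp add: coef_def hk_def numeral_2_eq_2)
  have "Ln (1 / 2 :: complex) \<noteq> 0"
  proof
    assume "Ln (1 / 2 :: complex) = 0"
    then have "exp (Ln (1 / 2 :: complex)) = 1" by simp
    then show False by simp
  qed
  then have p: "0 < (cmod (coef (hk 2) 0))\<^sup>2" using c0 by simp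
  have "(\<Sum>j\<in>{0}. (cmod (coef (hk 2) j))\<^sup>2) \<le> (\<Sum>j. (cmod (coef (hk 2) j))\<^sup>2)"
    by (rule sum_le_suminf[OF H2_summ[OF H]]) auto
  then have "(cmod (coef (hk 2) 0))\<^sup>2 \<le> (\<Sum>j. (cmod (coef (hk 2) j))\<^sup>2)" by simp
  with p have "0 < (\<Sum>j. (cmod (coef (hk 2) j))\<^sup>2)" by linarith
  then show ?thesis unfolding h2_norm_def by simp
qed

theorem mainTheorem18:
  fixes n :: nat
    and S :: "(complex \<Rightarrow> complex) \<Rightarrow> (complex \<Rightarrow> complex)"
  assumes "n \<ge> 2"
    and "is_adjoint_on_H2 (Wop n) S"
  shows "Nperp \<inter> hypercyclic_vectors S = {}"
proof (rule ccontr)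
  assume "Nperp \<inter> hypercyclic_vectors S \<noteq> {}"
  then obtain F where F: "F \<in> Nperp" "F \<in> hypercyclic_vectors S" by blast
  have iter: "(S ^^ m) F \<in> Nperp" for m
    by (induction m) (use F(1) S_Nperp[OF assms] in auto)
  have H: "hk 2 \<in> H2" by (rule hk_H2) simp
  obtain m where m: "h2_norm ((S ^^ m) F - hk 2) < h2_norm (hk 2)"
    using F(2) H hk2_norm_pos unfolding hypercyclic_vectors_def by blast
  have "(S ^^ m) F \<in> H2" "h2_inner ((S ^^ m) F) (hk 2) = 0"
    using iter[of m] hk2_Nspan by (auto simp: Nperp_def)
  from l2_lemma[OF this(1) H this(2)] m show False by simp
qed


end
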